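(* Let $p$ be an odd prime and $n,k$ positive integers. Then $\psi'(P^*(p^n,2^k))>\frac{19}{43}$ if and only if either ($p=3$, $n=1$, $k\ge1$) or ($p=5$, $n=1$, $k\le 2$).
   Context: For a finite group $G$, $\psi(G)=\sum_{x\in G} o(x)$ and $\psi'(G)=\psi(G)/\psi(\mathcal{C}_{|G|})$, where $\mathcal{C}_n$ is the cyclic group of order $n$. For an odd prime $p$ and positive integers $n,k$, $P^*(p^n,2^k)=A\rtimes\langle x\rangle$, where $A$ is elementary abelian of order $p^n$, $\langle x\rangle$ is cyclic of order $2^k$, and $x$ acts on $A$ by inversion. *)

theory Defs
  imports "HOL-Algebra.Multiplicative_Group" "HOL-Computational_Algebra.Primes"
begin

definition psi :: "('a, 'b) monoid_scheme \<Rightarrow> nat" where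
  "psi G = (\<Sum>x\<in>carrier G. group.ord G x)"

definition cyclic_grp :: "nat \<Rightarrow> nat monoid" where
  "cyclic_grp m = \<lparr>carrier = {0..<m}, monoid.mult = (\<lambda>x y. (x + y) mod m), one = 0\<rparr>"

definition psi' :: "('a, 'b) monoid_scheme \<Rightarrow> real" where
  "psi' G = real (psi G) / real (psi (cyclic_grp (order G)))"

text \<open>P*(p^n, 2^k) = A \<rtimes> <x>, A = (Z/p)^n elementary abelian (vectors indexed by
  0..n-1 with entries in 0..p-1, zero outside), <x> = Z/2^k, x acting on A by inversion:
  (a, x^i)(b, x^j) = (a + (-1)^i b, x^(i+j)).\<close>
definition Pstar :: "nat \<Rightarrow> nat \<Rightarrow> nat \<Rightarrow> ((nat \<Rightarrow> int) \<times> nat) monoid" where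
  "Pstar p n k = \<lparr>carrier = {(a, i). (\<forall>j<n. 0 \<le> a j \<and> a j < int p) \<and> (\<forall>j\<ge>n. a j = 0) \<and> i < 2 ^ k},
     monoid.mult = (\<lambda>(a, i) (b, j). ((\<lambda>t. (a t + (-1) ^ i * b t) mod int p), (i + j) mod 2 ^ k)),
     one = (\<lambda>_. 0, 0)\<rparr>"

end

theory Submission
  imports Defs "HOL-Number_Theory.Cong"
begin

lemma ord_eqI:
  assumes G: "group G" and "\<forall>m::nat. x [^]\<^bsub>G\<^esub> m = \<one>\<^bsub>G\<^esub> \<longleftrightarrow> d dvd m"
  shows "group.ord G x = d"
  unfolding group.ord_def[OF G]
proof (rule some_equality)
  show "\<forall>m::nat. x [^]\<^bsub>G\<^esub> m = \<one>\<^bsub>G\<^esub> \<longleftrightarrow> d dvd m" by fact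
next
  fix d' assume "\<forall>m::nat. x [^]\<^bsub>G\<^esub> m = \<one>\<^bsub>G\<^esub> \<longleftrightarrow> d' dvd m"
  with assms have "\<forall>m. d' dvd m \<longleftrightarrow> d dvd m" by simp
  then show "d' = d" by (meson dvd_antisym dvd_refl)
qed

lemma dvd_mult_iff_div_gcd:
  fixes m x y :: nat
  assumes "m > 0"
  shows "m dvd y * x \<longleftrightarrow> (m div gcd x m) dvd y"
proof -
  define g where "g = gcd x m"
  have g0: "g > 0" using assms by (simp add: g_def)
  obtain m' where m': "m = g * m'" unfolding g_def by (metis gcd_dvd2 dvdE)
  obtain x' where x': "x = g * x'" unfolding g_def by (metis gcd_dvd1 dvdE)
  have "x' = x div g" "m' = m div g" using m' x' g0 by simp_all
  then have cop: "coprime x' m'"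
    using div_gcd_coprime[of x m] assms unfolding g_def by simp
  have "m dvd y * x \<longleftrightarrow> m' dvd y * x'" using m' x' g0 by (simp add: ac_simps)
  also have "\<dots> \<longleftrightarrow> m' dvd y" using cop by (simp add: coprime_dvd_mult_left_iff coprime_commute)
  also have "m' = m div g" using m' g0 by simp
  finally show ?thesis by (simp add: g_def)
qed

lemma cyc_group: assumes "m > 0" shows "group (cyclic_grp m)"
proof (rule groupI)
  fix x assume x: "x \<in> carrier (cyclic_grp m)"
  show "\<exists>y \<in> carrier (cyclic_grp m). y \<otimes>\<^bsub>cyclic_grp m\<^esub> x = \<one>\<^bsub>cyclic_grp m\<^esub>"
    using x assms by (intro bexI[where x = "(m - x) mod m"]) (auto simp: cyclic_grp_def mod_add_left_eq)
next
  fix x y z assume "x \<in> carrier (cyclic_grp m)" "y \<in> carrier (cyclic_grp m)" "z \<in> carrier (cyclic_grp m)"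
  show "x \<otimes>\<^bsub>cyclic_grp m\<^esub> y \<otimes>\<^bsub>cyclic_grp m\<^esub> z = x \<otimes>\<^bsub>cyclic_grp m\<^esub> (y \<otimes>\<^bsub>cyclic_grp m\<^esub> z)"
    by (simp add: cyclic_grp_def mod_add_left_eq mod_add_right_eq add.assoc)
qed (use assms in \<open>auto simp: cyclic_grp_def\<close>)

lemma cyc_pow: "x [^]\<^bsub>cyclic_grp m\<^esub> (y::nat) = (y * x) mod m"
  by (induction y) (simp_all add: cyclic_grp_def mod_add_right_eq add.commute)

lemma cyc_one: "\<one>\<^bsub>cyclic_grp m\<^esub> = 0" by (simp add: cyclic_grp_def)

lemma cyc_ord:
  assumes "m > 0"
  shows "group.ord (cyclic_grp m) x = m div gcd x m"
proof (rule ord_eqI[OF cyc_group[OF assms]], intro allI)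
  fix y :: nat
  have "x [^]\<^bsub>cyclic_grp m\<^esub> y = \<one>\<^bsub>cyclic_grp m\<^esub> \<longleftrightarrow> m dvd y * x"
    unfolding cyc_pow cyc_one by (rule dvd_eq_mod_eq_0[symmetric])
  then show "x [^]\<^bsub>cyclic_grp m\<^esub> y = \<one>\<^bsub>cyclic_grp m\<^esub> \<longleftrightarrow> (m div gcd x m) dvd y"
    using dvd_mult_iff_div_gcd[OF assms] by simp
qed

definition f :: "nat \<Rightarrow> nat" where "f m = (\<Sum>x<m. m div gcd x m)"

lemma psi_cyc: "m > 0 \<Longrightarrow> psi (cyclic_grp m) = f m"
  unfolding psi_def f_def
proof -
  assume m: "m > 0"
  have "carrier (cyclic_grp m) = {..<m}" by (auto simp: cyclic_grp_def)
  then show "(\<Sum>x\<in>carrier (cyclic_grp m). group.ord (cyclic_grp m) x) = (\<Sum>x<m. m div gcd x m)" using cyc_ord[OF m] by simp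
qed

lemma dvd_unique_nat: "(\<forall>y::nat. d dvd y \<longleftrightarrow> e dvd y) \<Longrightarrow> d = e"
  by (meson dvd_antisym dvd_refl)

lemma ordc_mult:
  fixes a b x :: nat
  assumes "coprime a b" "a > 0" "b > 0"
  shows "(a*b) div gcd x (a*b) = (a div gcd (x mod a) a) * (b div gcd (x mod b) b)"
proof -
  have ga: "gcd (x mod a) a = gcd x a" using assms by (simp add: gcd_mod_left)
  have gb: "gcd (x mod b) b = gcd x b" using assms by (simp add: gcd_mod_left)
  have da: "a div gcd x a dvd a" using dvd_mult_div_cancel[OF gcd_dvd2[of x a]] by (metis dvd_triv_right)
  have db: "b div gcd x b dvd b" using dvd_mult_div_cancel[OF gcd_dvd2[of x b]] by (metis dvd_triv_right)
  have cop: "coprime (a div gcd x a) (b div gcd x b)"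
    using coprime_divisors[OF da db assms(1)] .
  have "\<forall>y. (a*b) div gcd x (a*b) dvd y \<longleftrightarrow> (a div gcd x a) * (b div gcd x b) dvd y"
  proof
    fix y
    have "(a*b) div gcd x (a*b) dvd y \<longleftrightarrow> a*b dvd y * x"
      using dvd_mult_iff_div_gcd[of "a*b" y x] assms by simp
    also have "\<dots> \<longleftrightarrow> a dvd y * x \<and> b dvd y * x"
      using assms(1) by (meson divides_mult dvd_mult_left dvd_mult_right)
    also have "\<dots> \<longleftrightarrow> (a div gcd x a) dvd y \<and> (b div gcd x b) dvd y"
      using dvd_mult_iff_div_gcd[of a y x] dvd_mult_iff_div_gcd[of b y x] assms by simp
    also have "\<dots> \<longleftrightarrow> (a div gcd x a) * (b div gcd x b) dvd y"
      using cop by (meson divides_mult dvd_mult_left dvd_mult_right)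
    finally show "(a*b) div gcd x (a*b) dvd y \<longleftrightarrow> (a div gcd x a) * (b div gcd x b) dvd y" .
  qed
  then show ?thesis using ga gb dvd_unique_nat by simp
qed

lemma f_mult:
  assumes "coprime a b" "a > 0" "b > 0"
  shows "f (a*b) = f a * f b"
proof -
  let ?h = "\<lambda>x. (x mod a, x mod b)"
  have inj: "inj_on ?h {..<a*b}"
  proof (rule inj_onI)
    fix x y assume "x \<in> {..<a*b}" "y \<in> {..<a*b}" "?h x = ?h y"
    then have "[x = y] (mod a*b)" "x < a*b" "y < a*b"
      using coprime_cong_mult_nat[of x y a b] assms by (auto simp: cong_def)
    then show "x = y" using cong_less_modulus_unique_nat by blast
  qed
  have sub: "?h ` {..<a*b} \<subseteq> {..<a} \<times> {..<b}" using assms by auto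
  have "card (?h ` {..<a*b}) = card ({..<a} \<times> {..<b})"
    using card_image[OF inj] by (simp add: card_cartesian_product)
  then have im: "?h ` {..<a*b} = {..<a} \<times> {..<b}"
    using sub by (simp add: card_subset_eq)
  have bij: "bij_betw ?h {..<a*b} ({..<a} \<times> {..<b})"
    using inj im by (simp add: bij_betw_def)
  have "f (a*b) = (\<Sum>x<a*b. (\<lambda>(u,v). (a div gcd u a) * (b div gcd v b)) (?h x))"
    unfolding f_def using ordc_mult[OF assms] by simp
  also have "\<dots> = (\<Sum>(u,v)\<in>{..<a} \<times> {..<b}. (a div gcd u a) * (b div gcd v b))"
    using sum.reindex_bij_betw[OF bij, of "\<lambda>(u,v). (a div gcd u a) * (b div gcd v b)"] by simp
  also have "\<dots> = f a * f b"
    unfolding f_def sum_product sum.cartesian_product by simp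
  finally show ?thesis .
qed

lemma f_rec:
  fixes q e :: nat
  assumes q: "prime q"
  shows "f (q^Suc e) + q^(2*e+1) = f (q^e) + q^(2*e+2)"
proof -
  have q0: "q > 0" using q prime_gt_0_nat by blast
  define M where "M = (\<lambda>y. q*y) ` {..<q^e}"
  define N where "N = {..<q^Suc e} - M"
  have MS: "M \<subseteq> {..<q^Suc e}" unfolding M_def using q0 by auto
  have injM: "inj_on (\<lambda>y. q*y) {..<q^e}" using q0 by (auto simp: inj_on_def)
  have cardM: "card M = q^e" unfolding M_def using card_image[OF injM] by simp
  have cardN: "card N = q^Suc e - q^e" unfolding N_def using MS cardM
    by (simp add: card_Diff_subset finite_subset)
  have sumM: "(\<Sum>x\<in>M. q^Suc e div gcd x (q^Suc e)) = f (q^e)"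
  proof -
    have "(\<Sum>x\<in>M. q^Suc e div gcd x (q^Suc e)) = (\<Sum>y<q^e. q^Suc e div gcd (q*y) (q^Suc e))"
      unfolding M_def by (simp add: sum.reindex[OF injM])
    also have "\<dots> = (\<Sum>y<q^e. q^e div gcd y (q^e))"
    proof (rule sum.cong)
      fix y
      have "gcd (q*y) (q^Suc e) = q * gcd y (q^e)" by (simp add: gcd_mult_distrib_nat)
      then show "q^Suc e div gcd (q*y) (q^Suc e) = q^e div gcd y (q^e)" using q0 by simp
    qed simp
    finally show ?thesis unfolding f_def .
  qed
  have sumN: "(\<Sum>x\<in>N. q^Suc e div gcd x (q^Suc e)) = card N * q^Suc e"
  proof -
    have "\<And>x. x \<in> N \<Longrightarrow> gcd x (q^Suc e) = 1"
    proof -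
      fix x assume "x \<in> N"
      then have "\<not> q dvd x" unfolding N_def M_def by auto
      then have "coprime x q" using q by (metis coprime_commute prime_imp_coprime)
      then show "gcd x (q^Suc e) = 1" by simp
    qed
    then show ?thesis by simp
  qed
  have "f (q^Suc e) = (\<Sum>x\<in>M. q^Suc e div gcd x (q^Suc e)) + (\<Sum>x\<in>N. q^Suc e div gcd x (q^Suc e))"
    unfolding f_def N_def using MS sum.subset_diff[of M "{..<q^Suc e}"] by (simp add: add.commute)
  also have "\<dots> = f (q^e) + (q^Suc e - q^e) * q^Suc e" using sumM sumN cardN by simp
  finally have "f (q^Suc e) = f (q^e) + (q^Suc e - q^e) * q^Suc e" .
  moreover have "q^e \<le> q^Suc e" using q0 by simp
  moreover have "q^(2*e+1) = q^e * q^Suc e" "q^(2*e+2) = q^Suc e * q^Suc e"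
    by (simp_all add: power_add[symmetric] mult_2)
  moreover have "(q^Suc e - q^e) * q^Suc e + q^e * q^Suc e = q^Suc e * q^Suc e"
    using \<open>q^e \<le> q^Suc e\<close> by (metis add_mult_distrib le_add_diff_inverse2)
  ultimately show ?thesis by (metis add.assoc)
qed

lemma f_prime_power:
  assumes q: "prime q"
  shows "(q+1) * f (q^e) = q^(2*e+1) + 1"
proof (induction e)
  case 0
  show ?case by (simp add: f_def)
next
  case (Suc e)
  have r: "f (q^Suc e) + q^(2*e+1) = f (q^e) + q^(2*e+2)" by (rule f_rec[OF q])
  define Z where "Z = q^(2*e+1)"
  have z2: "q^(2*e+2) = q*Z" "q^(2*Suc e+1) = q*(q*Z)" unfolding Z_def by simp_all
  have "(q+1) * f (q^Suc e) + (q+1) * Z = (q+1) * f (q^e) + (q+1) * (q*Z)"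
    using r z2 unfolding Z_def by (metis distrib_left)
  then have "(q+1) * f (q^Suc e) + (q+1) * Z = Z + 1 + (q+1) * (q*Z)"
    using Suc.IH unfolding Z_def by simp
  then have "(q+1) * f (q^Suc e) = q*(q*Z) + 1" by (simp add: algebra_simps)
  then show ?case by (simp only: z2(2))
qed

definition Vset :: "nat \<Rightarrow> nat \<Rightarrow> (nat \<Rightarrow> int) set" where
  "Vset p n = {a. (\<forall>j<n. 0 \<le> a j \<and> a j < int p) \<and> (\<forall>j\<ge>n. a j = 0)}"

lemma Vset_Suc:
  "Vset p (Suc n) = (\<lambda>(a,c). a(n:=c)) ` (Vset p n \<times> {0..<int p})"
proof
  show "Vset p (Suc n) \<subseteq> (\<lambda>(a,c). a(n:=c)) ` (Vset p n \<times> {0..<int p})"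
  proof
    fix b assume b: "b \<in> Vset p (Suc n)"
    have "b = (\<lambda>(a,c). a(n:=c)) (b(n:=0), b n)" by simp
    moreover have "(b(n:=0), b n) \<in> Vset p n \<times> {0..<int p}"
      using b unfolding Vset_def by auto
    ultimately show "b \<in> (\<lambda>(a,c). a(n:=c)) ` (Vset p n \<times> {0..<int p})" by blast
  qed
next
  show "(\<lambda>(a,c). a(n:=c)) ` (Vset p n \<times> {0..<int p}) \<subseteq> Vset p (Suc n)"
    unfolding Vset_def by (auto simp: less_Suc_eq)
qed

lemma Vset_inj: "inj_on (\<lambda>(a,c). a(n:=c)) (Vset p n \<times> {0..<int p})"
proof (rule inj_onI, clarify)
  fix a c a' c' assume "a \<in> Vset p n" "a' \<in> Vset p n" "a(n := c) = a'(n := c')"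
  then have "\<forall>t. (a(n := c)) t = (a'(n := c')) t" by simp
  then have "c = c'" "\<forall>t. t \<noteq> n \<longrightarrow> a t = a' t" by (metis fun_upd_same, metis fun_upd_other)
  moreover have "a n = 0" "a' n = 0" using \<open>a \<in> Vset p n\<close> \<open>a' \<in> Vset p n\<close> unfolding Vset_def by auto
  ultimately show "a = a' \<and> c = c'" by (metis ext)
qed

lemma Vset_card: "finite (Vset p n) \<and> card (Vset p n) = p^n"
proof (induction n)
  case 0
  have "Vset p 0 = {\<lambda>_. 0}" unfolding Vset_def by auto
  then show ?case by simp
next
  case (Suc n)
  then show ?case unfolding Vset_Suc using card_image[OF Vset_inj]
    by (simp add: card_cartesian_product)
qed

lemma carrier_Pstar: "carrier (Pstar p n k) = Vset p n \<times> {..<2^k}"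
  unfolding Pstar_def Vset_def by auto

lemma zero_Vset: "p > 0 \<Longrightarrow> (\<lambda>_. 0) \<in> Vset p n" unfolding Vset_def by auto

lemma Vset_mod: "a \<in> Vset p n \<Longrightarrow> a t mod int p = a t"
  unfolding Vset_def by (cases "t < n") auto

lemma Vset_modI: "p > 0 \<Longrightarrow> a \<in> Vset p n \<Longrightarrow> (\<lambda>t. (c * a t) mod int p) \<in> Vset p n"
  unfolding Vset_def by auto

lemma mult_Pstar: "(a,i) \<otimes>\<^bsub>Pstar p n k\<^esub> (b,j) = ((\<lambda>t. (a t + (-1) ^ i * b t) mod int p), (i + j) mod 2 ^ k)"
  by (simp add: Pstar_def)

lemma one_Pstar: "\<one>\<^bsub>Pstar p n k\<^esub> = (\<lambda>_. 0, 0)"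
  by (simp add: Pstar_def)

lemma sign_mod: "k \<ge> 1 \<Longrightarrow> (-1::int) ^ (x mod 2^k) = (-1) ^ x"
proof -
  assume k: "k \<ge> 1"
  have "(x mod 2^k) mod 2 = x mod 2" using k
    by (metis dvd_power mod_mod_cancel zero_less_one not_one_le_zero less_le_trans le_less)
  then show ?thesis by (metis minus_one_power_iff odd_iff_mod_2_eq_one)
qed

lemma modhelper: "((a::int) + s * (y mod p)) mod p = (a + s * y) mod p"
  by (metis mod_add_right_eq mod_mult_right_eq)

lemma group_Pstar:
  assumes p: "p > 0" and k: "k \<ge> 1"
  shows "group (Pstar p n k)"
proof (rule groupI)
  fix x y assume "x \<in> carrier (Pstar p n k)" "y \<in> carrier (Pstar p n k)"
  then show "x \<otimes>\<^bsub>Pstar p n k\<^esub> y \<in> carrier (Pstar p n k)"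
    using p unfolding carrier_Pstar by (auto simp: mult_Pstar Vset_def)
next
  show "\<one>\<^bsub>Pstar p n k\<^esub> \<in> carrier (Pstar p n k)"
    unfolding carrier_Pstar one_Pstar using zero_Vset[OF p] by auto
next
  fix x y z assume "x \<in> carrier (Pstar p n k)" "y \<in> carrier (Pstar p n k)" "z \<in> carrier (Pstar p n k)"
  obtain a i where x: "x = (a,i)" by fastforce
  obtain b j where y: "y = (b,j)" by fastforce
  obtain c l where z: "z = (c,l)" by fastforce
  have s: "(-1::int) ^ ((i + j) mod 2^k) = (-1)^i * (-1)^j" using sign_mod[OF k] by (simp add: power_add)
  show "x \<otimes>\<^bsub>Pstar p n k\<^esub> y \<otimes>\<^bsub>Pstar p n k\<^esub> z = x \<otimes>\<^bsub>Pstar p n k\<^esub> (y \<otimes>\<^bsub>Pstar p n k\<^esub> z)"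
    unfolding x y z mult_Pstar s
  proof (simp, intro conjI ext)
    fix t
    show "((a t + (-1) ^ i * b t) mod int p + (-1) ^ i * (-1) ^ j * c t) mod int p =
          (a t + (-1) ^ i * ((b t + (-1) ^ j * c t) mod int p)) mod int p"
    proof -
      have 1: "((a t + (-1) ^ i * b t) mod int p + (-1) ^ i * (-1) ^ j * c t) mod int p
           = (a t + (-1) ^ i * b t + (-1) ^ i * (-1) ^ j * c t) mod int p" by (rule mod_add_left_eq)
      have 2: "(a t + (-1) ^ i * ((b t + (-1) ^ j * c t) mod int p)) mod int p
           = (a t + (-1) ^ i * (b t + (-1) ^ j * c t)) mod int p" by (rule modhelper)
      show ?thesis unfolding 1 2 by (simp add: algebra_simps)
    qed
    show "((i + j) mod 2 ^ k + l) mod 2 ^ k = (i + (j + l) mod 2 ^ k) mod 2 ^ k"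
      by (simp add: mod_add_left_eq mod_add_right_eq add.assoc)
  qed
next
  fix x assume "x \<in> carrier (Pstar p n k)"
  then obtain a i where x: "x = (a,i)" and a: "a \<in> Vset p n" and i: "i < 2^k"
    unfolding carrier_Pstar by auto
  show "\<one>\<^bsub>Pstar p n k\<^esub> \<otimes>\<^bsub>Pstar p n k\<^esub> x = x"
    unfolding x one_Pstar mult_Pstar using i Vset_mod[OF a] by auto
next
  fix x assume "x \<in> carrier (Pstar p n k)"
  then obtain a i where x: "x = (a,i)" and a: "a \<in> Vset p n" and i: "i < 2^k"
    unfolding carrier_Pstar by auto
  define j where "j = (2^k - i) mod 2^k"
  define b where "b = (\<lambda>t. (- ((-1)^j * a t)) mod int p)"
  have "b \<in> Vset p n" unfolding b_def using Vset_modI[OF p a, of "- ((-1)^j)"] by simp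
  moreover have "j < 2^k" unfolding j_def by simp
  moreover have "(b, j) \<otimes>\<^bsub>Pstar p n k\<^esub> x = \<one>\<^bsub>Pstar p n k\<^esub>"
    unfolding x one_Pstar mult_Pstar b_def
  proof (simp, intro conjI ext)
    fix t show "(- ((-1) ^ j * a t) mod int p + (-1) ^ j * a t) mod int p = 0"
      by (simp add: mod_add_left_eq)
    show "(j + i) mod 2 ^ k = 0" unfolding j_def using i
      by (simp add: mod_add_left_eq)
  qed
  ultimately show "\<exists>y\<in>carrier (Pstar p n k). y \<otimes>\<^bsub>Pstar p n k\<^esub> x = \<one>\<^bsub>Pstar p n k\<^esub>"
    unfolding carrier_Pstar by blast
qed

lemma pow_even:
  assumes p: "p > 0" and k: "k \<ge> 1" and a: "a \<in> Vset p n" and i: "even i"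
  shows "(a,i) [^]\<^bsub>Pstar p n k\<^esub> (m::nat) = (\<lambda>t. (int m * a t) mod int p, (m*i) mod 2^k)"
proof (induction m)
  case 0 then show ?case by (simp add: one_Pstar)
next
  case (Suc m)
  have "(2::nat) dvd 2^k" using k by (cases k) auto
  then have "even ((m*i) mod 2^k)" using i by (simp add: dvd_mod)
  then have s: "(-1::int) ^ ((m*i) mod 2^k) = 1" by simp
  show ?case
    apply (simp add: Suc mult_Pstar s)
    apply (intro conjI ext)
     apply (metis mod_add_left_eq add.commute distrib_right mult_1)
    apply (metis mod_add_left_eq add.commute)
    done
qed

lemma pow_odd:
  assumes p: "p > 0" and k: "k \<ge> 1" and a: "a \<in> Vset p n" and i: "odd i"
  shows "(a,i) [^]\<^bsub>Pstar p n k\<^esub> (m::nat) = (if even m then (\<lambda>_. 0) else a, (m*i) mod 2^k)"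
proof (induction m)
  case 0 then show ?case by (simp add: one_Pstar)
next
  case (Suc m)
  have s: "(-1::int) ^ ((m*i) mod 2^k) = (-1) ^ (m*i)" by (rule sign_mod[OF k])
  have md: "((m * i) mod 2 ^ k + i) mod 2 ^ k = (Suc m * i) mod 2 ^ k"
    by (metis mod_add_left_eq add.commute mult_Suc)
  have md2: "(i + (m * i) mod 2 ^ k) mod 2 ^ k = (i + m * i) mod 2 ^ k"
    by (simp add: mod_add_right_eq)
  show ?case
  proof (cases "even m")
    case True
    then show ?thesis using i by (simp add: Suc mult_Pstar s md md2 Vset_mod[OF a])
  next
    case False
    then show ?thesis using i by (simp add: Suc mult_Pstar s md md2)
  qed
qed

lemma coprime_pow2_odd: "odd (i::nat) \<Longrightarrow> coprime (2^k) i"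
  by simp

lemma ord_Pstar:
  assumes p: "prime p" "odd p" and k: "k \<ge> 1" and a: "a \<in> Vset p n" and i: "i < 2^k"
  shows "group.ord (Pstar p n k) (a,i) =
    (if odd i then 2^k else (if a = (\<lambda>_. 0) then 1 else p) * (2^k div gcd i (2^k)))"
proof -
  have p0: "p > 0" using p prime_gt_0_nat by blast
  have G: "group (Pstar p n k)" by (rule group_Pstar[OF p0 k])
  have K0: "(2::nat)^k > 0" by simp
  have ev2: "(2::nat) dvd 2^k" using k by (cases k) auto
  show ?thesis
  proof (cases "odd i")
    case True
    have "\<forall>m::nat. (a,i) [^]\<^bsub>Pstar p n k\<^esub> m = \<one>\<^bsub>Pstar p n k\<^esub> \<longleftrightarrow> 2^k dvd m"
    proof
      fix m :: nat
      have "2^k dvd m * i \<longleftrightarrow> 2^k dvd m"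
        using coprime_pow2_odd[OF True, of k] by (simp add: coprime_dvd_mult_left_iff)
      moreover have "2^k dvd m \<Longrightarrow> even m" using ev2 by (meson dvd_trans)
      moreover have "(a,i) [^]\<^bsub>Pstar p n k\<^esub> m = \<one>\<^bsub>Pstar p n k\<^esub> \<longleftrightarrow>
         (if even m then (\<lambda>_. 0) else a) = (\<lambda>_. 0) \<and> m*i mod 2^k = 0"
        unfolding pow_odd[OF p0 k a True] one_Pstar by (rule prod.inject)
      ultimately show "(a,i) [^]\<^bsub>Pstar p n k\<^esub> m = \<one>\<^bsub>Pstar p n k\<^esub> \<longleftrightarrow> 2^k dvd m"
        by (metis dvd_eq_mod_eq_0)
    qed
    then have "group.ord (Pstar p n k) (a,i) = 2^k" by (rule ord_eqI[OF G])
    then show ?thesis using True by simp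
  next
    case False
    have ev: "even i" using False by simp
    show ?thesis
    proof (cases "a = (\<lambda>_. 0)")
      case True
      have "\<forall>m::nat. (a,i) [^]\<^bsub>Pstar p n k\<^esub> m = \<one>\<^bsub>Pstar p n k\<^esub> \<longleftrightarrow> (2^k div gcd i (2^k)) dvd m"
      proof
        fix m :: nat
        have "(\<lambda>t. int m * a t mod int p) = (\<lambda>_. 0)" using True by simp
        then have "(a,i) [^]\<^bsub>Pstar p n k\<^esub> m = \<one>\<^bsub>Pstar p n k\<^esub> \<longleftrightarrow> m*i mod 2^k = 0"
          unfolding pow_even[OF p0 k a ev] one_Pstar by simp
        also have "\<dots> \<longleftrightarrow> (2^k div gcd i (2^k)) dvd m"
          using dvd_mult_iff_div_gcd[OF K0, of m i] by (metis dvd_eq_mod_eq_0)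
        finally show "(a,i) [^]\<^bsub>Pstar p n k\<^esub> m = \<one>\<^bsub>Pstar p n k\<^esub> \<longleftrightarrow> (2^k div gcd i (2^k)) dvd m" .
      qed
      then have "group.ord (Pstar p n k) (a,i) = 2^k div gcd i (2^k)" by (rule ord_eqI[OF G])
      then show ?thesis using True ev by simp
    next
      case False
      then obtain t0 where t0: "a t0 \<noteq> 0" by auto
      have "t0 < n" using a t0 unfolding Vset_def by (metis (mono_tags, lifting) mem_Collect_eq not_less)
      then have at0: "0 < a t0" "a t0 < int p" using a t0 unfolding Vset_def by auto
      have ndvd: "\<not> int p dvd a t0" using at0 zdvd_imp_le by fastforce
      have pint: "prime (int p)" using p by simp
      have c1: "(\<forall>t. (int m * a t) mod int p = 0) \<longleftrightarrow> p dvd m" for m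
      proof
        assume "\<forall>t. (int m * a t) mod int p = 0"
        then have "int p dvd int m * a t0" by (simp add: dvd_eq_mod_eq_0)
        then have "int p dvd int m" using ndvd pint prime_dvd_mult_iff by blast
        then show "p dvd m" by simp
      next
        assume "p dvd m"
        then show "\<forall>t. (int m * a t) mod int p = 0" by (simp add: dvd_eq_mod_eq_0[symmetric])
      qed
      have cdvd: "2^k div gcd i (2^k) dvd 2^k"
        using dvd_mult_div_cancel[OF gcd_dvd2[of i "2^k"]] by (metis dvd_triv_right)
      have "coprime p (2^k)" using p by (simp add: prime_imp_coprime)
      then have cop: "coprime p (2^k div gcd i (2^k))"
        using cdvd coprime_divisors dvd_refl by blast
      have "\<forall>m::nat. (a,i) [^]\<^bsub>Pstar p n k\<^esub> m = \<one>\<^bsub>Pstar p n k\<^esub> \<longleftrightarrow> (p * (2^k div gcd i (2^k))) dvd m"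
      proof
        fix m :: nat
        have "(a,i) [^]\<^bsub>Pstar p n k\<^esub> m = \<one>\<^bsub>Pstar p n k\<^esub> \<longleftrightarrow>
              (\<forall>t. (int m * a t) mod int p = 0) \<and> (m * i) mod 2^k = 0"
          unfolding pow_even[OF p0 k a ev] one_Pstar by (auto simp: fun_eq_iff)
        also have "\<dots> \<longleftrightarrow> p dvd m \<and> (2^k div gcd i (2^k)) dvd m"
          using c1[of m] dvd_mult_iff_div_gcd[OF K0, of m i] dvd_eq_mod_eq_0[of "2^k" "m*i"] by blast
        also have "\<dots> \<longleftrightarrow> (p * (2^k div gcd i (2^k))) dvd m"
          using cop by (meson divides_mult dvd_mult_left dvd_mult_right)
        finally show "(a,i) [^]\<^bsub>Pstar p n k\<^esub> m = \<one>\<^bsub>Pstar p n k\<^esub> \<longleftrightarrow> (p * (2^k div gcd i (2^k))) dvd m" .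
      qed
      then have "group.ord (Pstar p n k) (a,i) = p * (2^k div gcd i (2^k))" by (rule ord_eqI[OF G])
      then show ?thesis using False ev by simp
    qed
  qed
qed

lemma sum_even_odd: fixes N :: nat shows "(\<Sum>i<2*N. h i) = (\<Sum>j<N. h (2*j) + h (2*j+1))"
  by (induction N) (simp_all add: lessThan_Suc add_ac)

lemma psi_Pstar:
  assumes p: "prime p" "odd p"
  shows "psi (Pstar p n (Suc k')) = 2^k' * p^n * 2^Suc k' + (1 + (p^n - 1)*p) * f (2^k')"
proof -
  define K where "K = (2::nat)^Suc k'"
  define V where "V = Vset p n"
  have p0: "p > 0" using p prime_gt_0_nat by blast
  have k: "Suc k' \<ge> 1" by simp
  have finV: "finite V" and cardV: "card V = p^n" using Vset_card unfolding V_def by auto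
  have zV: "(\<lambda>_. 0) \<in> V" unfolding V_def by (rule zero_Vset[OF p0])
  define g where "g i = (if odd i then p^n * K else (1 + (p^n - 1)*p) * (K div gcd i K))" for i
  have inner: "(\<Sum>a\<in>V. group.ord (Pstar p n (Suc k')) (a,i)) = g i" if i: "i < K" for i
  proof -
    have o: "group.ord (Pstar p n (Suc k')) (a,i) =
      (if odd i then K else (if a = (\<lambda>_. 0) then 1 else p) * (K div gcd i K))" if "a \<in> V" for a
      using ord_Pstar[OF p k, of a n i] that i unfolding V_def K_def by simp
    show ?thesis
    proof (cases "odd i")
      case True
      then show ?thesis using o cardV by (simp add: g_def)
    next
      case False
      have "(\<Sum>a\<in>V. group.ord (Pstar p n (Suc k')) (a,i)) =
            (\<Sum>a\<in>V. (if a = (\<lambda>_. 0) then 1 else p) * (K div gcd i K))"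
        using o False by simp
      also have "\<dots> = (if (\<lambda>_::nat. 0::int) = (\<lambda>_. 0) then 1 else p) * (K div gcd i K) + (\<Sum>a\<in>V - {\<lambda>_. 0}. (if a = (\<lambda>_. 0) then 1 else p) * (K div gcd i K))"
        by (rule sum.remove[OF finV zV, of "\<lambda>a. (if a = (\<lambda>_. 0) then 1 else p) * (K div gcd i K)"])
      also have "(\<Sum>a\<in>V - {\<lambda>_. 0}. (if a = (\<lambda>_. 0) then 1 else p) * (K div gcd i K)) = (\<Sum>a\<in>V - {\<lambda>_. 0}. p * (K div gcd i K))"
        by (rule sum.cong) auto
      also have "\<dots> = (p^n - 1) * (p * (K div gcd i K))"
        using cardV finV zV by (simp add: card_Diff_singleton)
      finally show ?thesis using False by (simp add: g_def algebra_simps)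
    qed
  qed
  have "psi (Pstar p n (Suc k')) = (\<Sum>x\<in>V \<times> {..<K}. group.ord (Pstar p n (Suc k')) x)"
    unfolding psi_def carrier_Pstar V_def K_def ..
  also have "\<dots> = (\<Sum>a\<in>V. \<Sum>i<K. group.ord (Pstar p n (Suc k')) (a,i))"
    by (rule sum.cartesian_product')
  also have "\<dots> = (\<Sum>i<K. \<Sum>a\<in>V. group.ord (Pstar p n (Suc k')) (a,i))"
    by (rule sum.swap)
  also have "\<dots> = (\<Sum>i<K. g i)" using inner by simp
  also have "\<dots> = (\<Sum>j<2^k'. g (2*j) + g (2*j+1))"
    unfolding K_def using sum_even_odd[of g "2^k'"] by simp
  also have "\<dots> = (\<Sum>j<2^k'. (1 + (p^n - 1)*p) * (2^k' div gcd j (2^k')) + p^n * K)"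
  proof (rule sum.cong)
    fix j
    have "gcd (2*j) K = 2 * gcd j (2^k')" unfolding K_def by (simp add: gcd_mult_distrib_nat)
    then have "K div gcd (2*j) K = 2^k' div gcd j (2^k')" unfolding K_def by simp
    then show "g (2*j) + g (2*j+1) = (1 + (p^n - 1)*p) * (2^k' div gcd j (2^k')) + p^n * K"
      unfolding g_def by simp
  qed simp
  also have "\<dots> = (1 + (p^n - 1)*p) * f (2^k') + 2^k' * p^n * K"
    unfolding f_def by (simp add: sum.distrib sum_distrib_left)
  finally show ?thesis unfolding K_def by simp
qed

definition LL :: "nat \<Rightarrow> nat \<Rightarrow> nat \<Rightarrow> nat" where
  "LL p P X = 43*(p+1)*(3*P*X + (1+(P-1)*p)*(X+1))"
definition RR :: "nat \<Rightarrow> nat \<Rightarrow> nat \<Rightarrow> nat" where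
  "RR p P X = 19*(p*P*P+1)*(4*X+1)"

lemma L3: assumes "P \<ge> 9" "X \<ge> 2" shows "LL 3 P X \<le> RR 3 P X"
proof -
  obtain b c where "P = 9 + b" "X = 2 + c" using assms by (metis le_add_diff_inverse)
  then show ?thesis unfolding LL_def RR_def by (simp add: algebra_simps)
qed

lemma L5: assumes "P \<ge> 25" "X \<ge> 2" shows "LL 5 P X \<le> RR 5 P X"
proof -
  obtain b c where "P = 25 + b" "X = 2 + c" using assms by (metis le_add_diff_inverse)
  then show ?thesis unfolding LL_def RR_def by (simp add: algebra_simps)
qed

lemma L5b: assumes "X \<ge> 32" shows "LL 5 5 X \<le> RR 5 5 X"
proof -
  obtain c where "X = 32 + c" using assms by (metis le_add_diff_inverse)
  then show ?thesis unfolding LL_def RR_def by (simp add: algebra_simps)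
qed

lemma L7: assumes "p \<ge> 7" "P \<ge> p" "X \<ge> 2" shows "LL p P X \<le> RR p P X"
proof -
  obtain a where a: "p = 7 + a" using assms by (metis le_add_diff_inverse)
  obtain b where b: "P = 7 + a + b" using assms a by (metis le_add_diff_inverse)
  obtain c where c: "X = 2 + c" using assms by (metis le_add_diff_inverse)
  show ?thesis unfolding LL_def RR_def a b c by (simp add: algebra_simps)
qed

lemma T3: "RR 3 3 X < LL 3 3 X" unfolding LL_def RR_def by simp
lemma T5: "X \<le> 8 \<Longrightarrow> RR 5 5 X < LL 5 5 X" unfolding LL_def RR_def by simp

lemma key:
  assumes p: "prime p" "odd p" and n: "n \<ge> 1"
  shows "RR p (p^n) (2^(2*k'+1)) < LL p (p^n) (2^(2*k'+1)) \<longleftrightarrow> ((p = 3 \<and> n = 1) \<or> (p = 5 \<and> n = 1 \<and> k' \<le> 1))"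
proof -
  define X where "X = (2::nat)^(2*k'+1)"
  have X2: "X \<ge> 2" unfolding X_def by (metis One_nat_def le_add2 power_increasing power_one_right zero_less_numeral one_le_numeral)
  have p3: "p \<ge> 3" using p by (metis prime_ge_2_nat le_antisym not_less_eq_eq numeral_2_eq_2 numeral_3_eq_3 even_numeral)
  have pc: "p = 3 \<or> p = 5 \<or> p \<ge> 7"
  proof -
    have "p \<noteq> 4" "p \<noteq> 6" using p by auto
    then show ?thesis using p3 by linarith
  qed
  show ?thesis
  proof (cases "n = 1")
    case True
    show ?thesis
    proof -
      consider "p = 3" | "p = 5" | "p \<ge> 7" using pc by blast
      then show ?thesis
      proof cases
        case 1 then show ?thesis unfolding X_def[symmetric] using True T3 by (simp add: X_def[symmetric])
      next
        case 2
        show ?thesis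
        proof (cases "k' \<le> 1")
          case True
          then have "X \<le> 8" unfolding X_def using power_increasing[of "2*k'+1" 3 "2::nat"] by simp
          then show ?thesis unfolding X_def[symmetric] using True \<open>n = 1\<close> 2 T5[of X] by simp
        next
          case False
          then have "X \<ge> 32" unfolding X_def using power_increasing[of 5 "2*k'+1" "2::nat"] by simp
          then show ?thesis unfolding X_def[symmetric] using False \<open>n = 1\<close> 2 L5b[of X] by (simp add: not_less)
        qed
      next
        case 3 then show ?thesis unfolding X_def[symmetric] using True L7[of p p X] X2 by (simp add: not_less)
      qed
    qed
  next
    case False
    then have n2: "n \<ge> 2" using n by simp
    have Pge: "p^n \<ge> p^2" using n2 p3 by (simp add: power_increasing)
    consider "p = 3" | "p = 5" | "p \<ge> 7" using pc by blast
    then show ?thesis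
    proof cases
      case 1 then show ?thesis unfolding X_def[symmetric] using False L3[of "p^n" X] X2 Pge by (simp add: not_less)
    next
      case 2 then show ?thesis unfolding X_def[symmetric] using False L5[of "p^n" X] X2 Pge by (simp add: not_less)
    next
      case 3
      have "p^n \<ge> p" using Pge by (metis le_trans power2_nat_le_imp_le le_refl self_le_power zero_less_two p3 not_numeral_le_zero)
      then show ?thesis unfolding X_def[symmetric] using False 3 L7[of p "p^n" X] X2 by (simp add: not_less)
    qed
  qed
qed

theorem corollary3p10:
  fixes p n k :: nat
  assumes "prime p" and "odd p" and "n \<ge> 1" and "k \<ge> 1"
  shows "psi' (Pstar p n k) > 19 / 43 \<longleftrightarrow>
           ((p = 3 \<and> n = 1 \<and> k \<ge> 1) \<or> (p = 5 \<and> n = 1 \<and> k \<le> 2))"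
proof -
  obtain k' where kk: "k = Suc k'" using assms(4) by (metis Suc_le_D One_nat_def)
  define P where "P = p^n"
  define X where "X = (2::nat)^(2*k'+1)"
  have p0: "p > 0" using assms(1) prime_gt_0_nat by blast
  have P0: "P > 0" unfolding P_def using p0 by simp
  have psiG: "psi (Pstar p n k) = P * X + (1 + (P - 1)*p) * f (2^k')"
  proof -
    have "(2::nat)^k' * 2^Suc k' = X" unfolding X_def power_add[symmetric] by simp
    then have "2^k' * P * 2^Suc k' = P * X" by (simp add: mult_ac)
    then show ?thesis unfolding kk psi_Pstar[OF assms(1,2)] P_def by simp
  qed
  have ord: "order (Pstar p n k) = P * 2^k"
    unfolding order_def carrier_Pstar P_def using Vset_card[of p n] by (simp add: card_cartesian_product)
  have cop: "coprime P (2^k)" unfolding P_def using assms(1,2)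
    by simp
  have psiC: "psi (cyclic_grp (order (Pstar p n k))) = f P * f (2^k)"
    unfolding ord using psi_cyc[of "P * 2^k"] f_mult[OF cop P0] P0 by simp
  have pp: "p^(2*n+1) = p^n * p^Suc n" by (simp add: power_add[symmetric] mult_2)
  have fP: "(p+1) * f P = p*P*P + 1"
    using f_prime_power[OF assms(1), of n] unfolding P_def pp by (simp add: algebra_simps)
  have f2: "3 * f (2^k) = 4*X + 1"
    using f_prime_power[OF two_is_prime_nat, of k] unfolding X_def kk by (simp add: power_add[symmetric] algebra_simps)
  have f2': "3 * f (2^k') = X + 1"
    using f_prime_power[OF two_is_prime_nat, of k'] unfolding X_def by simp
  have C3: "3*(p+1) * psi (cyclic_grp (order (Pstar p n k))) = (p*P*P+1)*(4*X+1)"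
  proof -
    have "3*(p+1) * (f P * f (2^k)) = ((p+1) * f P) * (3 * f (2^k))" by (simp add: algebra_simps)
    then show ?thesis unfolding psiC fP f2 .
  qed
  have G3: "3*(p+1) * psi (Pstar p n k) = (p+1) * (3*P*X + (1 + (P - 1)*p) * (X+1))"
    unfolding psiG using f2' by (simp add: algebra_simps)
  have Cpos: "psi (cyclic_grp (order (Pstar p n k))) > 0"
  proof (rule ccontr)
    assume "\<not> psi (cyclic_grp (order (Pstar p n k))) > 0"
    then have "psi (cyclic_grp (order (Pstar p n k))) = 0" by simp
    then show False using C3 by simp
  qed
  have "psi' (Pstar p n k) > 19 / 43 \<longleftrightarrow>
        19 * real (psi (cyclic_grp (order (Pstar p n k)))) < 43 * real (psi (Pstar p n k))"
    unfolding psi'_def using Cpos by (simp add: divide_simps mult.commute)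
  also have "\<dots> \<longleftrightarrow> 19 * psi (cyclic_grp (order (Pstar p n k))) < 43 * psi (Pstar p n k)"
    by linarith
  also have "\<dots> \<longleftrightarrow> 3*(p+1) * (19 * psi (cyclic_grp (order (Pstar p n k)))) < 3*(p+1) * (43 * psi (Pstar p n k))"
    by simp
  also have "\<dots> \<longleftrightarrow> RR p P X < LL p P X"
  proof -
    have "3*(p+1) * (19 * psi (cyclic_grp (order (Pstar p n k)))) = 19 * (3*(p+1) * psi (cyclic_grp (order (Pstar p n k))))"
      by (simp add: mult_ac)
    also have "\<dots> = RR p P X" unfolding C3 RR_def by (simp add: algebra_simps)
    finally have 1: "3*(p+1) * (19 * psi (cyclic_grp (order (Pstar p n k)))) = RR p P X" .
    have "3*(p+1) * (43 * psi (Pstar p n k)) = 43 * (3*(p+1) * psi (Pstar p n k))"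
      by (simp add: mult_ac)
    also have "\<dots> = LL p P X" unfolding G3 LL_def by (rule mult.assoc[symmetric])
    finally have 2: "3*(p+1) * (43 * psi (Pstar p n k)) = LL p P X" .
    show ?thesis unfolding 1 2 ..
  qed
  also have "\<dots> \<longleftrightarrow> ((p = 3 \<and> n = 1) \<or> (p = 5 \<and> n = 1 \<and> k' \<le> 1))"
    unfolding P_def X_def by (rule key[OF assms(1,2,3)])
  finally show ?thesis using kk by auto
qed

end
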